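(* Let $\Gamma=(N,A,u)$ be a game with $N=\{1,\dots,n\}$ and $A_i=A_j$ for all $i,j\in N$. Then $\Gamma$ is VNM symmetric if and only if for each transposition $\pi\in S_N$ we have $u_i(s_1,\dots,s_n)=u_{\pi(i)}(s_{\pi(1)},\dots,s_{\pi(n)})$ for all $i\in N$ and $(s_1,\dots,s_n)\in A$.
   Context: A (finite normal-form) game $\Gamma=(N,A,u)$ consists of a finite set $N$ of at least two players, a finite non-empty strategy set $A_i$ for each $i\in N$, $A=\times_{i\in N}A_i$, and utility functions $u_i:A\to\mathbb{R}$. $\Gamma$ is VNM symmetric if $A_i=A_j$ for all $i,j\in N$ and, for each permutation $\pi\in S_N$, $u_{\pi(i)}(s_1,\dots,s_n)=u_i(s_{\pi(1)},\dots,s_{\pi(n)})$ for all $i\in N$ and $(s_1,\dots,s_n)\in A$. *)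

theory Defs
  imports "HOL-Combinatorics.Combinatorics" "HOL-Library.FuncSet"
begin

text \<open>Strategy profiles are the extensional functions
  in PiE {1..n} (\<lambda>_. S); utility of player i at profile s is u i s.\<close>

definition game :: "nat \<Rightarrow> 'a set \<Rightarrow> (nat \<Rightarrow> (nat \<Rightarrow> 'a) \<Rightarrow> real) \<Rightarrow> bool" where
  "game n S u \<longleftrightarrow> 2 \<le> n \<and> finite S \<and> S \<noteq> {}"

definition profiles :: "nat \<Rightarrow> 'a set \<Rightarrow> (nat \<Rightarrow> 'a) set" where
  "profiles n S = PiE {1..n} (\<lambda>_. S)"

text \<open>VNM symmetry: for every permutation pi of N, u_(pi i)(s_1..s_n) = u_i(s_(pi 1)..s_(pi n)).
  The permuted profile (s_(pi 1),...,s_(pi n)) is s o pi.\<close>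

definition vnm_symmetric :: "nat \<Rightarrow> 'a set \<Rightarrow> (nat \<Rightarrow> (nat \<Rightarrow> 'a) \<Rightarrow> real) \<Rightarrow> bool" where
  "vnm_symmetric n S u \<longleftrightarrow>
     (\<forall>\<pi>. \<pi> permutes {1..n} \<longrightarrow>
        (\<forall>i\<in>{1..n}. \<forall>s\<in>profiles n S. u (\<pi> i) s = u i (s \<circ> \<pi>)))"

end

theory Submission
  imports Defs
begin

lemma prof_comp:
  assumes "p permutes {1..n}" "s \<in> profiles n S"
  shows "s \<circ> p \<in> profiles n S"
proof -
  have img: "\<And>x. x \<in> {1..n} \<Longrightarrow> p x \<in> {1..n}" using permutes_in_image[OF assms(1)] by simp
  have out: "\<And>x. x \<notin> {1..n} \<Longrightarrow> p x = x" using assms(1) by (simp add: permutes_def)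
  show ?thesis using assms(2) img out unfolding profiles_def PiE_def Pi_def extensional_def
    by (auto simp del: atLeastAtMost_iff)
qed

theorem mainTheorem17:
  fixes n :: nat and S :: "'a set" and u :: "nat \<Rightarrow> (nat \<Rightarrow> 'a) \<Rightarrow> real"
  assumes "game n S u"
  shows "vnm_symmetric n S u \<longleftrightarrow>
    (\<forall>a\<in>{1..n}. \<forall>b\<in>{1..n}. a \<noteq> b \<longrightarrow>
       (\<forall>i\<in>{1..n}. \<forall>s\<in>profiles n S.
          u i s = u (transpose a b i) (s \<circ> transpose a b)))"
proof
  assume V: "vnm_symmetric n S u"
  show "\<forall>a\<in>{1..n}. \<forall>b\<in>{1..n}. a \<noteq> b \<longrightarrow>
       (\<forall>i\<in>{1..n}. \<forall>s\<in>profiles n S.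
          u i s = u (transpose a b i) (s \<circ> transpose a b))"
  proof (intro ballI impI)
    fix a b i s assume ab: "a \<in> {1..n}" "b \<in> {1..n}" "a \<noteq> b" and i: "i \<in> {1..n}"
      and s: "s \<in> profiles n S"
    have p: "transpose a b permutes {1..n}" using ab by (simp add: permutes_swap_id)
    have ti: "transpose a b i \<in> {1..n}" using permutes_in_image[OF p] i by simp
    have "u (transpose a b (transpose a b i)) s = u (transpose a b i) (s \<circ> transpose a b)"
      using V p ti s unfolding vnm_symmetric_def by blast
    then show "u i s = u (transpose a b i) (s \<circ> transpose a b)" by simp
  qed
next
  assume T: "\<forall>a\<in>{1..n}. \<forall>b\<in>{1..n}. a \<noteq> b \<longrightarrow>
       (\<forall>i\<in>{1..n}. \<forall>s\<in>profiles n S.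
          u i s = u (transpose a b i) (s \<circ> transpose a b))"
  show "vnm_symmetric n S u"
    unfolding vnm_symmetric_def
  proof (intro allI impI)
    fix \<pi> assume "\<pi> permutes {1..n}"
    moreover have "finite {1..n}" by simp
    ultimately show "\<forall>i\<in>{1..n}. \<forall>s\<in>profiles n S. u (\<pi> i) s = u i (s \<circ> \<pi>)"
    proof (induct rule: permutes_induct)
      case id show ?case by simp
    next
      case (swap a b p)
      show ?case
      proof (intro ballI)
        fix i s assume i: "i \<in> {1..n}" and s: "s \<in> profiles n S"
        have pt: "transpose a b permutes {1..n}" using swap by (simp add: permutes_swap_id)
        have pi: "p i \<in> {1..n}" using permutes_in_image[OF swap(5)] i by simp
        have tpi: "transpose a b (p i) \<in> {1..n}" using permutes_in_image[OF pt] pi by simp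
        have st: "s \<circ> transpose a b \<in> profiles n S" using prof_comp[OF pt s] .
        have "u (transpose a b (p i)) s = u (transpose a b (transpose a b (p i))) (s \<circ> transpose a b)"
          using T swap(1-3) tpi s by blast
        also have "\<dots> = u (p i) (s \<circ> transpose a b)" by simp
        also have "\<dots> = u i (s \<circ> transpose a b \<circ> p)" using swap(4) i st by blast
        finally show "u ((transpose a b \<circ> p) i) s = u i (s \<circ> (transpose a b \<circ> p))"
          by (simp add: comp_assoc)
      qed
    qed
  qed
qed

end
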